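(* For the family of plane curves $y^3+3r(x)y^2-3p(x)y+2q(x)=0$ parametrised by triples $(p,q,r)$ of univariate polynomials, the cuspidal component of the discriminant is the zero set of the resultant of $p(x)+r(x)^2$ and $2q(x)-r(x)^3$ with respect to $x$. Moreover, if $$p(x)=\sum_{i=0}^d\lambda_ix^i,\quad q(x)=x^n+\sum_{i=0}^{n-1}\xi_ix^i,\quad r(x)=\sum_{i=0}^{\lfloor n/3\rfloor}\zeta_ix^i,$$ then the equation of the cuspidal component, considered as a polynomial in the variable $\lambda_0$, is of degree $n$ with coprime coefficients.
   Context: The cuspidal component of the discriminant is the set of parameters $(p,q,r)$ for which the projection $(x,y)\mapsto x$ restricted to the curve has a degenerate critical point, i.e. there is a common zero of $f$, $\partial_yf$, $\partial_y^2f$ where $f=y^3+3r(x)y^2-3p(x)y+2q(x)$. The coefficients of the polynomial in $\lambda_0$ are polynomials in the remaining parameters $\lambda_i\ (i\ge1),\xi_i,\zeta_i$. *)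

theory Defs
  imports Complex_Main "HOL-Library.Poly_Mapping" "HOL-Computational_Algebra.Polynomial"
    "Subresultants.Resultant_Prelim"
begin

text \<open>Cuspidal locus: the curve y^3 + 3 r(x) y^2 - 3 p(x) y + 2 q(x) = 0 has a point where
  f, its first and its second partial derivative in y vanish simultaneously.\<close>
definition cuspidal :: "complex poly \<Rightarrow> complex poly \<Rightarrow> complex poly \<Rightarrow> bool" where
  "cuspidal p q r \<longleftrightarrow> (\<exists>x y :: complex.
      y^3 + 3 * poly r x * y^2 - 3 * poly p x * y + 2 * poly q x = 0 \<and>
      3 * y^2 + 6 * poly r x * y - 3 * poly p x = 0 \<and>
      6 * y + 6 * poly r x = 0)"

text \<open>Parameters: Lam i is lambda_i (used for i \<ge> 1; lambda_0 is the distinguished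
  polynomial variable), Xi i is xi_i, Zeta i is zeta_i.\<close>
datatype param = Lam nat | Xi nat | Zeta nat

text \<open>Multivariate polynomials over C in the parameters other than lambda_0.\<close>
type_synonym mpoly = "(param \<Rightarrow>\<^sub>0 nat) \<Rightarrow>\<^sub>0 complex"

definition pvar :: "param \<Rightarrow> mpoly" where
  "pvar v = Poly_Mapping.single (Poly_Mapping.single v 1) 1"

text \<open>Generic polynomials in x (outer poly) whose coefficients are polynomials in lambda_0
  (inner poly) with coefficients in the remaining parameters.\<close>
definition gen_p :: "nat \<Rightarrow> mpoly poly poly" where
  "gen_p d = [:[:0, 1:]:] + (\<Sum>i\<in>{1..d}. monom [:pvar (Lam i):] i)"

definition gen_q :: "nat \<Rightarrow> mpoly poly poly" where
  "gen_q n = monom 1 n + (\<Sum>i<n. monom [:pvar (Xi i):] i)"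

definition gen_r :: "nat \<Rightarrow> mpoly poly poly" where
  "gen_r n = (\<Sum>i\<le>n div 3. monom [:pvar (Zeta i):] i)"

definition cusp_equation :: "nat \<Rightarrow> nat \<Rightarrow> mpoly poly" where
  "cusp_equation d n = resultant (gen_p d + (gen_r n)^2) (2 * gen_q n - (gen_r n)^3)"

end

theory Submission
  imports Defs "Subresultants.Subresultant_Gcd" "HOL-Computational_Algebra.Fundamental_Theorem_Algebra"
    "HOL-Computational_Algebra.Field_as_Ring"
begin

lemma aux_id1: "(- c)^3 + 3 * c * (- c)^2 - 3 * a * (- c) + 2 * b = (2 * b - c^3) + 3 * c * (a + c^2)"
  for a b c :: complex
  by (simp add: algebra_simps power2_eq_square power3_eq_cube)

lemma aux_id2: "3 * (- c)^2 + 6 * c * (- c) - 3 * a = - 3 * (a + c^2)"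
  for a c :: complex
  by (simp add: algebra_simps power2_eq_square)

lemma cusp_iff_common_root:
  "cuspidal p q r \<longleftrightarrow> (\<exists>x. poly (p + r^2) x = 0 \<and> poly (2 * q - r^3) x = 0)"
proof
  assume "cuspidal p q r"
  then obtain x y where e1: "y^3 + 3 * poly r x * y^2 - 3 * poly p x * y + 2 * poly q x = 0"
    and e2: "3 * y^2 + 6 * poly r x * y - 3 * poly p x = 0" and e3: "6 * y + 6 * poly r x = 0"
    unfolding cuspidal_def by blast
  from e3 have "6 * (y + poly r x) = 0" by (simp add: algebra_simps)
  then have "y + poly r x = 0" by (metis mult_eq_0_iff zero_neq_numeral)
  then have y: "y = - poly r x" by (simp add: eq_neg_iff_add_eq_0)
  from e2 have a: "poly p x + (poly r x)^2 = 0" unfolding y by (simp add: algebra_simps power2_eq_square) (metis add.left_inverse)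
  from e1 have "2 * poly q x - (poly r x)^3 + 3 * poly r x * (poly p x + (poly r x)^2) = 0"
    unfolding y aux_id1 .
  with a have b: "2 * poly q x - (poly r x)^3 = 0" by simp
  show "\<exists>x. poly (p + r^2) x = 0 \<and> poly (2 * q - r^3) x = 0"
    using a b by (intro exI[of _ x]) simp
next
  assume "\<exists>x. poly (p + r^2) x = 0 \<and> poly (2 * q - r^3) x = 0"
  then obtain x where a: "poly p x + (poly r x)^2 = 0" and b: "2 * poly q x - (poly r x)^3 = 0" by auto
  show "cuspidal p q r" unfolding cuspidal_def
  proof (rule exI[of _ x], rule exI[of _ "- poly r x"], intro conjI)
    show "3 * (- poly r x)^2 + 6 * poly r x * (- poly r x) - 3 * poly p x = 0"
      unfolding aux_id2 a by simp
    show "6 * (- poly r x) + 6 * poly r x = 0" by simp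
    have "(- poly r x)^3 + 3 * poly r x * (- poly r x)^2 - 3 * poly p x * (- poly r x) + 2 * poly q x
       = (2 * poly q x - (poly r x)^3) + 3 * poly r x * (poly p x + (poly r x)^2)"
      by (rule aux_id1)
    then show "(- poly r x)^3 + 3 * poly r x * (- poly r x)^2 - 3 * poly p x * (- poly r x) + 2 * poly q x = 0"
      using a b by simp
  qed
qed

lemma common_root_iff_resultant:
  fixes F G :: "complex poly"
  shows "(\<exists>x. poly F x = 0 \<and> poly G x = 0) \<longleftrightarrow> (resultant F G = 0 \<or> (F = 0 \<and> G = 0))"
proof (cases "F = 0 \<and> G = 0")
  case True then show ?thesis by auto
next
  case False
  then have g0: "gcd F G \<noteq> 0" by auto
  have "(\<exists>x. poly F x = 0 \<and> poly G x = 0) \<longleftrightarrow> (\<exists>x. poly (gcd F G) x = 0)"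
    by (simp add: poly_eq_0_iff_dvd)
  also have "\<dots> \<longleftrightarrow> degree (gcd F G) \<noteq> 0"
  proof
    assume "\<exists>x. poly (gcd F G) x = 0"
    then obtain x where "poly (gcd F G) x = 0" by auto
    then show "degree (gcd F G) \<noteq> 0" using g0
      by (metis degree_eq_zeroE poly_const_conv pCons_0_0)
  next
    assume "degree (gcd F G) \<noteq> 0"
    then show "\<exists>x. poly (gcd F G) x = 0" by (intro alg_closed_imp_poly_has_root) simp
  qed
  also have "\<dots> \<longleftrightarrow> resultant F G = 0" by (simp add: resultant_0_gcd)
  finally show ?thesis using False by auto
qed

fun enc :: "param \<Rightarrow> nat" where
  "enc (Lam i) = 3 * i" | "enc (Xi i) = 3 * i + 1" | "enc (Zeta i) = 3 * i + 2"

lemma inj_enc: "inj enc"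
proof (rule injI)
  fix x y assume "enc x = enc y" then show "x = y"
    by (cases x; cases y; simp; presburger)
qed

instantiation param :: linorder
begin
definition less_eq_param :: "param \<Rightarrow> param \<Rightarrow> bool" where "less_eq_param x y \<longleftrightarrow> enc x \<le> enc y"
definition less_param :: "param \<Rightarrow> param \<Rightarrow> bool" where "less_param x y \<longleftrightarrow> enc x < enc y"
instance
proof
  fix x y z :: param
  show "(x < y) = (x \<le> y \<and> \<not> y \<le> x)" unfolding less_eq_param_def less_param_def by auto
  show "x \<le> x" unfolding less_eq_param_def by auto
  show "x \<le> y \<Longrightarrow> y \<le> z \<Longrightarrow> x \<le> z" unfolding less_eq_param_def by auto
  show "x \<le> y \<Longrightarrow> y \<le> x \<Longrightarrow> x = y" unfolding less_eq_param_def using inj_enc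
    by (meson antisym injD)
  show "x \<le> y \<or> y \<le> x" unfolding less_eq_param_def by auto
qed
end


definition mono_eval :: "(param \<Rightarrow> 'b :: comm_ring_1) \<Rightarrow> (param \<Rightarrow>\<^sub>0 nat) \<Rightarrow> 'b" where
  "mono_eval a m = (\<Prod>v \<in> Poly_Mapping.keys m. a v ^ Poly_Mapping.lookup m v)"

definition subst :: "(complex \<Rightarrow> 'b :: comm_ring_1) \<Rightarrow> (param \<Rightarrow> 'b) \<Rightarrow> mpoly \<Rightarrow> 'b" where
  "subst \<phi> a f = (\<Sum>m \<in> Poly_Mapping.keys f. \<phi> (Poly_Mapping.lookup f m) * mono_eval a m)"

lemma mono_eval_superset: assumes "finite S" "Poly_Mapping.keys m \<subseteq> S"
  shows "mono_eval a m = (\<Prod>v \<in> S. a v ^ Poly_Mapping.lookup m v)"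
  unfolding mono_eval_def
  by (rule prod.mono_neutral_left) (use assms in \<open>auto simp: in_keys_iff\<close>)

lemma mono_eval_add: "mono_eval a (m1 + m2) = mono_eval a m1 * mono_eval a m2"
proof -
  let ?S = "Poly_Mapping.keys m1 \<union> Poly_Mapping.keys m2"
  have "mono_eval a (m1 + m2) = (\<Prod>v \<in> ?S. a v ^ Poly_Mapping.lookup (m1 + m2) v)"
    by (rule mono_eval_superset) (use keys_add[of m1 m2] in auto)
  also have "\<dots> = (\<Prod>v \<in> ?S. a v ^ Poly_Mapping.lookup m1 v) * (\<Prod>v \<in> ?S. a v ^ Poly_Mapping.lookup m2 v)"
    by (simp add: lookup_add power_add prod.distrib)
  also have "\<dots> = mono_eval a m1 * mono_eval a m2"
    by (subst (1 2) mono_eval_superset[of ?S]) auto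
  finally show ?thesis .
qed

lemma mono_eval_0[simp]: "mono_eval a 0 = 1" unfolding mono_eval_def by simp

lemma mono_eval_single[simp]: "mono_eval a (Poly_Mapping.single v k) = a v ^ k"
  unfolding mono_eval_def by (cases "k = 0") auto

locale subst_hom =
  fixes \<phi> :: "complex \<Rightarrow> 'b :: comm_ring_1"
  assumes phi: "comm_ring_hom \<phi>"
begin

interpretation phi: comm_ring_hom \<phi> by (rule phi)

lemma subst_superset: assumes "finite S" "Poly_Mapping.keys f \<subseteq> S"
  shows "subst \<phi> a f = (\<Sum>m \<in> S. \<phi> (Poly_Mapping.lookup f m) * mono_eval a m)"
  unfolding subst_def
  by (rule sum.mono_neutral_left) (use assms in \<open>auto simp: in_keys_iff\<close>)

lemma subst_add: "subst \<phi> a (f + g) = subst \<phi> a f + subst \<phi> a g"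
proof -
  let ?S = "Poly_Mapping.keys f \<union> Poly_Mapping.keys g"
  have "subst \<phi> a (f + g) = (\<Sum>m \<in> ?S. \<phi> (Poly_Mapping.lookup (f + g) m) * mono_eval a m)"
    by (rule subst_superset) (use keys_add[of f g] in auto)
  also have "\<dots> = (\<Sum>m \<in> ?S. \<phi> (Poly_Mapping.lookup f m) * mono_eval a m) + (\<Sum>m \<in> ?S. \<phi> (Poly_Mapping.lookup g m) * mono_eval a m)"
    by (simp add: lookup_add phi.hom_add distrib_right sum.distrib)
  also have "\<dots> = subst \<phi> a f + subst \<phi> a g"
    by (subst (1 2) subst_superset[of ?S]) auto
  finally show ?thesis .
qed

lemma subst_0[simp]: "subst \<phi> a 0 = 0" unfolding subst_def by simp

lemma subst_sum: "subst \<phi> a (sum F S) = (\<Sum>s \<in> S. subst \<phi> a (F s))"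
  by (induct S rule: infinite_finite_induct) (auto simp: subst_add)

lemma subst_single[simp]: "subst \<phi> a (Poly_Mapping.single m c) = \<phi> c * mono_eval a m"
  by (cases "c = 0") (auto simp: subst_def)

lemma pm_sum_single: "f = (\<Sum>m \<in> Poly_Mapping.keys f. Poly_Mapping.single m (Poly_Mapping.lookup f m))"
  by (rule poly_mapping_eqI) (auto simp: lookup_sum lookup_single when_def in_keys_iff)

lemma subst_mult: "subst \<phi> a (f * g) = subst \<phi> a f * subst \<phi> a g"
proof -
  have "f * g = (\<Sum>m \<in> Poly_Mapping.keys f. Poly_Mapping.single m (Poly_Mapping.lookup f m)) *
               (\<Sum>m' \<in> Poly_Mapping.keys g. Poly_Mapping.single m' (Poly_Mapping.lookup g m'))"
    using pm_sum_single[of f] pm_sum_single[of g] by simp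
  also have "\<dots> = (\<Sum>m \<in> Poly_Mapping.keys f. \<Sum>m' \<in> Poly_Mapping.keys g.
      Poly_Mapping.single (m + m') (Poly_Mapping.lookup f m * Poly_Mapping.lookup g m'))"
    by (simp add: sum_product mult_single)
  finally have "subst \<phi> a (f * g) = (\<Sum>m \<in> Poly_Mapping.keys f. \<Sum>m' \<in> Poly_Mapping.keys g.
      \<phi> (Poly_Mapping.lookup f m) * mono_eval a m * (\<phi> (Poly_Mapping.lookup g m') * mono_eval a m'))"
    by (simp add: subst_sum mono_eval_add phi.hom_mult mult_ac)
  also have "\<dots> = subst \<phi> a f * subst \<phi> a g"
    unfolding subst_def by (simp add: sum_product)
  finally show ?thesis .
qed

lemma subst_1[simp]: "subst \<phi> a 1 = 1"
proof -
  have "(1 :: mpoly) = Poly_Mapping.single 0 1" by simp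
  then show ?thesis by (metis subst_single mono_eval_0 phi.hom_one mult_1)
qed

lemma subst_hom: "comm_ring_hom (subst \<phi> a)"
  by unfold_locales (auto simp: subst_add subst_mult)

end

lemma coeff_of_int_mult: "coeff (of_int z * x) k = of_int z * coeff (x :: 'a :: comm_ring_1 poly) k"
  by (simp add: of_int_poly)

lemma coeff_mult_bound:
  fixes p q :: "'a :: comm_semiring_1 poly"
  assumes "degree p \<le> a" "degree q \<le> b"
  shows "coeff (p * q) (a + b) = coeff p a * coeff q b"
proof -
  have "coeff (p * q) (a + b) = (\<Sum>i\<le>a + b. coeff p i * coeff q (a + b - i))" by (rule coeff_mult)
  also have "\<dots> = (\<Sum>i\<in>{a}. coeff p i * coeff q (a + b - i))"
  proof (rule sum.mono_neutral_right)
    show "\<forall>i\<in>{..a + b} - {a}. coeff p i * coeff q (a + b - i) = 0"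
    proof
      fix i assume i: "i \<in> {..a + b} - {a}"
      show "coeff p i * coeff q (a + b - i) = 0"
      proof (cases "i < a")
        case True then have "a + b - i > b" using i by auto
        then have "coeff q (a + b - i) = 0" using assms(2) by (intro coeff_eq_0) auto
        then show ?thesis by simp
      next
        case False then have "i > a" using i by auto
        then have "coeff p i = 0" using assms(1) by (intro coeff_eq_0) auto
        then show ?thesis by simp
      qed
    qed
  qed auto
  finally show ?thesis by simp
qed

lemma prod_coeff_bound:
  fixes f :: "'b \<Rightarrow> 'a :: comm_semiring_1 poly"
  assumes "finite I" "\<And>i. i \<in> I \<Longrightarrow> degree (f i) \<le> e i"
  shows "degree (\<Prod>i\<in>I. f i) \<le> (\<Sum>i\<in>I. e i) \<and> coeff (\<Prod>i\<in>I. f i) (\<Sum>i\<in>I. e i) = (\<Prod>i\<in>I. coeff (f i) (e i))"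
  using assms
proof (induct I rule: finite_induct)
  case empty then show ?case by simp
next
  case (insert x F)
  then have IH: "degree (\<Prod>i\<in>F. f i) \<le> (\<Sum>i\<in>F. e i)"
     "coeff (\<Prod>i\<in>F. f i) (\<Sum>i\<in>F. e i) = (\<Prod>i\<in>F. coeff (f i) (e i))" by auto
  have dx: "degree (f x) \<le> e x" using insert by auto
  show ?case
  proof
    show "degree (\<Prod>i\<in>insert x F. f i) \<le> (\<Sum>i\<in>insert x F. e i)"
      using insert IH dx by (simp add: degree_mult_le order.trans[OF degree_mult_le] add_mono)
    show "coeff (\<Prod>i\<in>insert x F. f i) (\<Sum>i\<in>insert x F. e i) = (\<Prod>i\<in>insert x F. coeff (f i) (e i))"
      using insert IH dx by (simp add: coeff_mult_bound)
  qed
qed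

lemma det_poly_top_coeff:
  fixes M :: "'a :: comm_ring_1 poly mat"
  assumes M: "M \<in> carrier_mat N N"
    and deg: "\<And>i j. i < N \<Longrightarrow> j < N \<Longrightarrow> degree (M $$ (i,j)) \<le> e i"
  shows "degree (det M) \<le> (\<Sum>i<N. e i) \<and>
    coeff (det M) (\<Sum>i<N. e i) = det (mat N N (\<lambda>(i,j). coeff (M $$ (i,j)) (e i)))"
proof -
  let ?E = "(\<Sum>i<N. e i)"
  have E: "?E = (\<Sum>i = 0..<N. e i)" by (simp add: lessThan_atLeast0)
  let ?P = "{p. p permutes {0..<N}}"
  have fin: "finite ?P" by (simp add: finite_permutations)
  have pr: "degree (\<Prod>i = 0..<N. M $$ (i, p i)) \<le> ?E \<and>
     coeff (\<Prod>i = 0..<N. M $$ (i, p i)) ?E = (\<Prod>i = 0..<N. coeff (M $$ (i, p i)) (e i))"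
    if p: "p \<in> ?P" for p
    unfolding E
  proof (rule prod_coeff_bound)
    fix i assume i: "i \<in> {0..<N}"
    then have "p i < N" using p by (auto simp: permutes_in_image)
    then show "degree (M $$ (i, p i)) \<le> e i" using deg i by auto
  qed simp
  have dsum: "det M = (\<Sum>p \<in> ?P. signof p * (\<Prod>i = 0..<N. M $$ (i, p i)))" by (rule det_def'[OF M])
  have dg: "degree (det M) \<le> ?E" unfolding dsum
  proof (rule degree_sum_le)
    fix p assume "p \<in> ?P"
    then show "degree (signof p * (\<Prod>i = 0..<N. M $$ (i, p i))) \<le> ?E"
      using pr[of p] by (metis (no_types, lifting) degree_mult_le degree_of_int add_0 order.trans)
  qed (rule fin)
  have "coeff (det M) ?E = (\<Sum>p \<in> ?P. signof p * (\<Prod>i = 0..<N. coeff (M $$ (i, p i)) (e i)))"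
    unfolding dsum coeff_sum coeff_of_int_mult using pr by (intro sum.cong) auto
  also have "\<dots> = det (mat N N (\<lambda>(i,j). coeff (M $$ (i,j)) (e i)))"
    by (subst det_def'[of _ N]) (auto intro!: sum.cong prod.cong simp: permutes_in_image)
  finally show ?thesis using dg by simp
qed


lemma coeff_neg1_pow_mult: "coeff ((-1)^j * x) k = (-1)^j * coeff (x :: 'a :: comm_ring_1 poly) k"
  by (cases "even j") auto

lemma res_top:
  fixes P1 Q1 :: "'a :: comm_ring_1 poly"
  defines "P \<equiv> [:[:0,1:]:] + map_poly (\<lambda>a. [:a:]) P1" and "Q \<equiv> map_poly (\<lambda>a. [:a:]) Q1"
  shows "degree (resultant P Q) \<le> degree Q1 \<and>
    coeff (resultant P Q) (degree Q1) = (-1)^(degree P * degree Q1) * lead_coeff Q1 ^ degree P"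
proof -
  let ?m = "degree P" and ?n = "degree Q1"
  have dQ: "degree Q = ?n" unfolding Q_def by (rule degree_map_poly) auto
  have cQ: "coeff Q k = [:coeff Q1 k:]" for k unfolding Q_def by (simp add: coeff_map_poly)
  have cP: "coeff P k = [:coeff P1 k:] + (if k = 0 then [:0,1:] else 0)" for k
    unfolding P_def by (cases k) (simp_all add: coeff_map_poly)
  let ?S = "sylvester_mat_sub ?n ?m Q P"
  define e where "e i = (if i < ?m then 0 else 1::nat)" for i
  have S: "?S \<in> carrier_mat (?n + ?m) (?n + ?m)" by (rule sylvester_mat_sub_carrier)
  have Sidx: "?S $$ (i,j) = (if i < ?m then
       if i \<le> j \<and> j - i \<le> ?n then [:coeff Q1 (?n + i - j):] else 0
     else if i - ?m \<le> j \<and> j \<le> i then [:coeff P1 (i-j):] + (if i - j = 0 then [:0,1:] else 0) else 0)"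
    if "i < ?n + ?m" "j < ?n + ?m" for i j
    using that by (simp add: sylvester_mat_sub_index cQ cP)
  have esum: "(\<Sum>i<?n + ?m. e i) = ?n"
  proof -
    have "(\<Sum>i<?n + ?m. e i) = (\<Sum>i\<in>{?m..<?n + ?m}. 1)"
      by (rule sum.mono_neutral_cong_right) (auto simp: e_def)
    then show ?thesis by simp
  qed
  have deg: "degree (?S $$ (i,j)) \<le> e i" if "i < ?n + ?m" "j < ?n + ?m" for i j
    unfolding Sidx[OF that] e_def
    by (auto simp: degree_add_le intro!: order.trans[OF degree_add_le])
  from det_poly_top_coeff[OF S deg] esum
  have top: "degree (det ?S) \<le> ?n"
     "coeff (det ?S) ?n = det (mat (?n + ?m) (?n + ?m) (\<lambda>(i,j). coeff (?S $$ (i,j)) (e i)))"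
    by auto
  let ?M = "mat (?n + ?m) (?n + ?m) (\<lambda>(i,j). coeff (?S $$ (i,j)) (e i))"
  have Midx: "?M $$ (i,j) = (if i < ?m then
       if i \<le> j \<and> j - i \<le> ?n then coeff Q1 (?n + i - j) else 0
     else if i = j then 1 else 0)"
    if "i < ?n + ?m" "j < ?n + ?m" for i j
    using that by (auto simp: Sidx e_def)
  have "det ?M = prod_list (diag_mat ?M)"
  proof (rule det_upper_triangular[of _ "?n + ?m"])
    show "upper_triangular ?M"
    proof (rule upper_triangularI)
      fix i j assume "j < i" "i < dim_row ?M"
      then show "?M $$ (i,j) = 0" by (subst Midx) auto
    qed
  qed auto
  also have "\<dots> = (\<Prod>i = 0..<?n + ?m. ?M $$ (i,i))" by (simp add: prod_list_diag_prod)
  also have "\<dots> = (\<Prod>i = 0..<?n + ?m. if i < ?m then lead_coeff Q1 else 1)"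
  proof (rule prod.cong)
    fix i assume "i \<in> {0..<?n + ?m}"
    then show "?M $$ (i,i) = (if i < ?m then lead_coeff Q1 else 1)" by (subst Midx) auto
  qed simp
  also have "\<dots> = (\<Prod>i = 0..<?m. lead_coeff Q1)"
    by (rule prod.mono_neutral_cong_right) auto
  also have "\<dots> = lead_coeff Q1 ^ ?m" by simp
  finally have dM: "det ?M = lead_coeff Q1 ^ ?m" .
  have rs: "resultant P Q = (-1)^(?m * ?n) * resultant Q P"
    using resultant_swap[of P Q] dQ by simp
  have rQP: "resultant Q P = det ?S" unfolding resultant_def sylvester_mat_def dQ ..
  show ?thesis
  proof
    show "degree (resultant P Q) \<le> ?n" unfolding rs rQP
      by (rule order.trans[OF degree_mult_le]) (cases "even (?m * ?n)"; use top in simp)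
    show "coeff (resultant P Q) ?n = (-1)^(?m * ?n) * lead_coeff Q1 ^ ?m"
      unfolding rs rQP coeff_neg1_pow_mult top(2) dM ..
  qed
qed

lemma (in comm_ring_hom) det_sylvester_hom:
  "hom (det (sylvester_mat_sub m n p q)) = det (sylvester_mat_sub m n (map_poly hom p) (map_poly hom q))"
  unfolding hom_det[symmetric]
proof (rule arg_cong[of _ _ det], rule eq_matI)
  fix i j assume "i < dim_row (sylvester_mat_sub m n (map_poly hom p) (map_poly hom q))"
    "j < dim_col (sylvester_mat_sub m n (map_poly hom p) (map_poly hom q))"
  then have ij: "i < m + n" "j < m + n" by auto
  show "map_mat hom (sylvester_mat_sub m n p q) $$ (i, j) =
        sylvester_mat_sub m n (map_poly hom p) (map_poly hom q) $$ (i, j)"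
    using ij by (simp add: sylvester_mat_sub_index coeff_map_poly)
qed auto

lemma det_sylvester_one:
  "det (sylvester_mat_sub m n p (1 :: 'a :: comm_ring_1 poly)) = coeff p m ^ n"
proof -
  let ?S = "sylvester_mat_sub m n p (1 :: 'a poly)"
  have idx: "?S $$ (i,j) = (if i < n then if i \<le> j \<and> j - i \<le> m then coeff p (m + i - j) else 0
     else if i = j then 1 else 0)" if "i < m + n" "j < m + n" for i j
    using that by (auto simp: sylvester_mat_sub_index coeff_1)
  have "det ?S = prod_list (diag_mat ?S)"
  proof (rule det_upper_triangular[of _ "m + n"])
    show "upper_triangular ?S"
    proof (rule upper_triangularI)
      fix i j assume "j < i" "i < dim_row ?S"
      then show "?S $$ (i,j) = 0" by (subst idx) auto
    qed
  qed (rule sylvester_mat_sub_carrier)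
  also have "\<dots> = (\<Prod>i = 0..<m + n. ?S $$ (i,i))" by (simp add: prod_list_diag_prod)
  also have "\<dots> = (\<Prod>i = 0..<m + n. if i < n then coeff p m else 1)"
  proof (rule prod.cong)
    fix i assume "i \<in> {0..<m + n}"
    then show "?S $$ (i,i) = (if i < n then coeff p m else 1)" by (subst idx) auto
  qed simp
  also have "\<dots> = (\<Prod>i = 0..<n. coeff p m)"
    by (rule prod.mono_neutral_cong_right) auto
  finally show ?thesis by simp
qed

definition Const :: "complex \<Rightarrow> mpoly" where "Const c = Poly_Mapping.single 0 c"

lemma Const_hom: "comm_ring_hom Const"
  by unfold_locales (auto simp: Const_def single_add mult_single)

interpretation Const: comm_ring_hom Const by (rule Const_hom)

lemma id_hom: "comm_ring_hom (\<lambda>x::'a::comm_ring_1. x)" by unfold_locales auto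

lemma subst_pvar: "subst \<phi> a (pvar v) = \<phi> 1 * a v"
  unfolding pvar_def subst_def by auto

lemma subst_Const: "subst \<phi> a (Const c) = (if c = 0 then 0 else \<phi> c)"
  unfolding Const_def subst_def by auto

lemma subst_comp:
  assumes g: "comm_ring_hom g"
  shows "g (subst \<phi> a f) = subst (g \<circ> \<phi>) (g \<circ> a) f"
proof -
  interpret g: comm_ring_hom g by (rule g)
  show ?thesis unfolding subst_def mono_eval_def by (simp add: g.hom_sum g.hom_mult g.hom_prod g.hom_power)
qed

lemma pvar_power: "pvar v ^ k = Poly_Mapping.single (Poly_Mapping.single v k) 1"
  by (induct k) (auto simp: pvar_def mult_single single_add[symmetric] add.commute)

lemma mono_eval_pvar: "mono_eval pvar m = Poly_Mapping.single m 1"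
proof -
  have "mono_eval pvar m = (\<Prod>v \<in> Poly_Mapping.keys m. Poly_Mapping.single (Poly_Mapping.single v (Poly_Mapping.lookup m v)) 1)"
    unfolding mono_eval_def pvar_power ..
  also have "\<dots> = Poly_Mapping.single (\<Sum>v \<in> Poly_Mapping.keys m. Poly_Mapping.single v (Poly_Mapping.lookup m v)) (1::complex)"
    by (induct rule: infinite_finite_induct) (auto simp: mult_single)
  also have "(\<Sum>v \<in> Poly_Mapping.keys m. Poly_Mapping.single v (Poly_Mapping.lookup m v)) = m"
    by (rule poly_mapping_eqI) (auto simp: lookup_sum lookup_single when_def in_keys_iff)
  finally show ?thesis .
qed

lemma subst_id: "subst Const pvar f = f"
proof -
  have "subst Const pvar f = (\<Sum>m \<in> Poly_Mapping.keys f. Poly_Mapping.single m (Poly_Mapping.lookup f m))"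
    unfolding subst_def mono_eval_pvar Const_def by (simp add: mult_single)
  also have "\<dots> = f"
    by (rule poly_mapping_eqI[symmetric]) (auto simp: lookup_sum lookup_single when_def in_keys_iff)
  finally show ?thesis .
qed

lemma subst_hom_I: "comm_ring_hom \<phi> \<Longrightarrow> comm_ring_hom (subst \<phi> a)"
  using subst_hom.subst_hom[of \<phi>] subst_hom.intro by blast

abbreviation C :: "mpoly \<Rightarrow> mpoly poly" where "C a \<equiv> [:a:]"

lemma C_hom: "comm_ring_hom C"
  by unfold_locales auto

interpretation Cm: map_poly_comm_ring_hom C using C_hom by (rule map_poly_comm_ring_hom.intro)

definition p1 :: "nat \<Rightarrow> mpoly poly" where "p1 d = (\<Sum>i\<in>{1..d}. monom (pvar (Lam i)) i)"
definition q0 :: "nat \<Rightarrow> mpoly poly" where "q0 n = monom 1 n + (\<Sum>i<n. monom (pvar (Xi i)) i)"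
definition r0 :: "nat \<Rightarrow> mpoly poly" where "r0 n = (\<Sum>i\<le>n div 3. monom (pvar (Zeta i)) i)"

lemma gen_p_eq: "gen_p d = [:[:0,1:]:] + map_poly C (p1 d)"
  unfolding gen_p_def p1_def by (simp add: Cm.hom_sum map_poly_monom)

lemma gen_q_eq: "gen_q n = map_poly C (q0 n)"
  unfolding gen_q_def q0_def by (simp add: Cm.hom_sum Cm.hom_add map_poly_monom)

lemma gen_r_eq: "gen_r n = map_poly C (r0 n)"
  unfolding gen_r_def r0_def by (simp add: Cm.hom_sum map_poly_monom)

lemma cusp_eq: "cusp_equation d n = resultant ([:[:0,1:]:] + map_poly C (p1 d + r0 n ^ 2))
   (map_poly C (2 * q0 n - r0 n ^ 3))"
  unfolding cusp_equation_def gen_p_eq gen_q_eq gen_r_eq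
  by (simp add: Cm.hom_add Cm.hom_mult Cm.hom_power Cm.hom_minus Cm.hom_numeral add.assoc)

lemma coeff_r0: "coeff (r0 n) i = (if i \<le> n div 3 then pvar (Zeta i) else 0)"
  unfolding r0_def coeff_sum coeff_monom by (auto simp: sum.delta)

lemma coeff_q0: "coeff (q0 n) i = (if i = n then 1 else if i < n then pvar (Xi i) else 0)"
  unfolding q0_def coeff_add coeff_sum coeff_monom by (auto simp: sum.delta)

lemma coeff_p1: "coeff (p1 d) i = (if 1 \<le> i \<and> i \<le> d then pvar (Lam i) else 0)"
  unfolding p1_def coeff_sum coeff_monom by (auto simp: sum.delta)

lemma degree_r0: "degree (r0 n) \<le> n div 3"
  by (rule degree_le) (auto simp: coeff_r0)

lemma degree_q0: "degree (q0 n) \<le> n"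
  by (rule degree_le) (auto simp: coeff_q0)

lemma degree_p1: "degree (p1 d) \<le> d"
  by (rule degree_le) (auto simp: coeff_p1)

definition Q1 :: "nat \<Rightarrow> mpoly poly" where "Q1 n = 2 * q0 n - r0 n ^ 3"
definition P1 :: "nat \<Rightarrow> nat \<Rightarrow> mpoly poly" where "P1 d n = p1 d + r0 n ^ 2"
definition L :: "nat \<Rightarrow> mpoly" where "L n = 2 - (if 3 dvd n then pvar (Zeta (n div 3)) ^ 3 else 0)"

definition ev0 :: "mpoly \<Rightarrow> complex" where "ev0 = subst (\<lambda>c. c) (\<lambda>_. 0)"

lemma ev0_hom: "comm_ring_hom ev0" unfolding ev0_def by (rule subst_hom_I[OF id_hom])

interpretation ev0: comm_ring_hom ev0 by (rule ev0_hom)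

lemma ev0_pvar[simp]: "ev0 (pvar v) = 0" unfolding ev0_def subst_pvar by simp

lemma L_nz: "L n \<noteq> 0"
proof -
  have "ev0 (L n) = 2" unfolding L_def by (simp add: hom_distribs)
  then show ?thesis by auto
qed

lemma coeff_r0_cube: "coeff (r0 n ^ 3) n = (if 3 dvd n then pvar (Zeta (n div 3)) ^ 3 else 0)"
proof (cases "3 dvd n")
  case True
  define k where "k = n div 3"
  have n: "n = k + k + k" using True unfolding k_def by auto
  have d: "degree (r0 n) \<le> k" using degree_r0 unfolding k_def .
  have d2: "degree (r0 n * r0 n) \<le> k + k" by (rule order.trans[OF degree_mult_le]) (use d in auto)
  have "coeff (r0 n ^ 3) n = coeff (r0 n * r0 n * r0 n) (k + k + k)" unfolding n by (simp add: power3_eq_cube)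
  also have "\<dots> = coeff (r0 n) k * coeff (r0 n) k * coeff (r0 n) k"
    using coeff_mult_bound[OF d2 d] coeff_mult_bound[OF d d] by simp
  also have "\<dots> = pvar (Zeta k) ^ 3" by (simp add: coeff_r0 k_def power3_eq_cube)
  finally show ?thesis using True k_def by simp
next
  case False
  have "degree (r0 n ^ 3) \<le> n div 3 * 3" by (rule order.trans[OF degree_power_le]) (use degree_r0 in auto)
  also have "\<dots> < n" using False by (metis dvd_triv_right le_neq_implies_less mult.commute div_times_less_eq_dividend)
  finally show ?thesis using False by (simp add: coeff_eq_0)
qed

lemma degree_Q1: "degree (Q1 n) = n" and lead_Q1: "lead_coeff (Q1 n) = L n"
proof -
  have d1: "degree (2 * q0 n) \<le> n"
    by (rule order.trans[OF degree_mult_le]) (use degree_q0 in \<open>auto simp: numeral_poly\<close>)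
  have d2: "degree (r0 n ^ 3) \<le> n"
    by (rule order.trans[OF degree_power_le]) (use degree_r0[of n] in auto)
  have le: "degree (Q1 n) \<le> n" unfolding Q1_def by (rule degree_diff_le[OF d1 d2])
  have c: "coeff (Q1 n) n = L n"
    unfolding Q1_def L_def coeff_diff coeff_r0_cube by (simp add: numeral_poly coeff_q0)
  have "degree (Q1 n) = n" using le c L_nz[of n] by (metis le_antisym le_degree)
  then show "degree (Q1 n) = n" "lead_coeff (Q1 n) = L n" using c by auto
qed

definition mdeg :: "nat \<Rightarrow> nat \<Rightarrow> nat" where "mdeg d n = degree ([:[:0,1:]:] + map_poly C (P1 d n))"

lemma cusp_eq2: "cusp_equation d n = resultant ([:[:0,1:]:] + map_poly C (P1 d n)) (map_poly C (Q1 n))"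
  unfolding cusp_eq P1_def Q1_def ..

lemma cusp_degree: "degree (cusp_equation d n) = n"
  and cusp_lead: "coeff (cusp_equation d n) n = (-1)^(mdeg d n * n) * L n ^ mdeg d n"
proof -
  from res_top[of "P1 d n" "Q1 n"]
  have *: "degree (cusp_equation d n) \<le> n" "coeff (cusp_equation d n) n = (-1)^(mdeg d n * n) * L n ^ mdeg d n"
    unfolding cusp_eq2[symmetric] mdeg_def using lead_Q1[of n] by (auto simp: degree_Q1)
  then show "coeff (cusp_equation d n) n = (-1)^(mdeg d n * n) * L n ^ mdeg d n" by simp
  have "coeff (cusp_equation d n) n \<noteq> 0" unfolding *(2) using L_nz by simp
  then show "degree (cusp_equation d n) = n" using *(1) by (meson le_antisym le_degree)
qed

definition aw :: "nat \<Rightarrow> complex \<Rightarrow> param \<Rightarrow> complex" where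
  "aw k w v = (case v of Zeta i \<Rightarrow> if i = k then w else 0 | Xi i \<Rightarrow> if i = 0 then 1/2 else 0
     | Lam i \<Rightarrow> if 2 * k < i then 1 else 0)"

definition evw :: "nat \<Rightarrow> complex \<Rightarrow> mpoly \<Rightarrow> complex" where "evw k w = subst (\<lambda>c. c) (aw k w)"

lemma evw_hom: "comm_ring_hom (evw k w)" unfolding evw_def by (rule subst_hom_I[OF id_hom])

lemma evw_pvar[simp]: "evw k w (pvar v) = aw k w v" unfolding evw_def subst_pvar by simp

lemma map_evw_r0: "map_poly (evw (n div 3) w) (r0 n) = monom w (n div 3)"
proof -
  interpret e: comm_ring_hom "evw (n div 3) w" by (rule evw_hom)
  show ?thesis by (rule poly_eqI) (auto simp: coeff_map_poly coeff_r0 aw_def)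
qed

lemma map_evw_q0: assumes "n \<ge> 1" shows "map_poly (evw k w) (q0 n) = monom 1 n + [:1/2:]"
proof -
  interpret e: comm_ring_hom "evw k w" by (rule evw_hom)
  show ?thesis using assms by (intro poly_eqI) (auto simp: coeff_map_poly coeff_q0 aw_def coeff_pCons split: nat.splits)
qed

lemma map_evw_Q1: assumes "n \<ge> 1" "3 dvd n" "w^3 = 2"
  shows "map_poly (evw (n div 3) w) (Q1 n) = 1"
proof -
  interpret e: map_poly_comm_ring_hom "evw (n div 3) w" by (rule map_poly_comm_ring_hom.intro, rule evw_hom)
  have n: "n = n div 3 * 3" using assms(2) by auto
  have "map_poly (evw (n div 3) w) (Q1 n) = 2 * (monom 1 n + [:1/2:]) - monom w (n div 3) ^ 3"
    unfolding Q1_def by (simp add: hom_distribs map_evw_r0 map_evw_q0[OF assms(1)])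
  also have "monom w (n div 3) ^ 3 = monom 2 n" unfolding monom_power assms(3) using n by simp
  also have "2 * (monom 1 n + [:1/2:]) - monom 2 n = (1 :: complex poly)"
    by (simp add: algebra_simps numeral_poly monom_altdef)
  finally show ?thesis .
qed


lemma map_poly_evw_hom: "comm_ring_hom (map_poly (evw k w))"
proof -
  interpret e: map_poly_comm_ring_hom "evw k w" by (rule map_poly_comm_ring_hom.intro, rule evw_hom)
  show ?thesis by unfold_locales (auto simp: hom_distribs)
qed

lemma P1_top:
  fixes d n :: nat
  assumes w: "w \<noteq> 0"
  defines "M \<equiv> max d (2 * (n div 3))"
  shows "degree (P1 d n) = M \<and> evw (n div 3) w (coeff (P1 d n) M) \<noteq> 0"
proof -
  let ?k = "n div 3"
  interpret e: map_poly_comm_ring_hom "evw ?k w" by (rule map_poly_comm_ring_hom.intro, rule evw_hom)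
  have d1: "degree (p1 d) \<le> M" using degree_p1[of d] unfolding M_def by auto
  have d2: "degree (r0 n ^ 2) \<le> M"
    by (rule order.trans[OF degree_power_le]) (use degree_r0[of n] in \<open>auto simp: M_def\<close>)
  have le: "degree (P1 d n) \<le> M" unfolding P1_def using degree_add_le[OF d1 d2] .
  have mp: "map_poly (evw ?k w) (P1 d n) = map_poly (evw ?k w) (p1 d) + monom (w^2) (2 * ?k)"
    unfolding P1_def by (simp add: hom_distribs map_evw_r0 monom_power mult.commute)
  have cp: "coeff (map_poly (evw ?k w) (p1 d)) j = (if 1 \<le> j \<and> j \<le> d \<and> 2 * ?k < j then 1 else 0)" for j
    by (auto simp: coeff_map_poly coeff_p1 aw_def)
  have "evw ?k w (coeff (P1 d n) M) = coeff (map_poly (evw ?k w) (P1 d n)) M" by (simp add: coeff_map_poly)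
  also have "\<dots> = (if 1 \<le> M \<and> M \<le> d \<and> 2 * ?k < M then 1 else 0) + (if M = 2 * ?k then w^2 else 0)"
    unfolding mp coeff_add cp coeff_monom by auto
  finally have ev: "evw ?k w (coeff (P1 d n) M) \<noteq> 0" using w unfolding M_def by (auto simp: max_def)
  then have "coeff (P1 d n) M \<noteq> 0" by auto
  then have "M \<le> degree (P1 d n)" by (rule le_degree)
  with le ev show ?thesis by auto
qed


lemma map_poly_const: "f 0 = 0 \<Longrightarrow> map_poly f [:a:] = [:f a:]"
  by (intro poly_eqI) (auto simp: coeff_map_poly coeff_pCons split: nat.splits)

lemma evw_0[simp]: "evw k w 0 = 0" unfolding evw_def subst_def by simp

lemma degree_P_cases: "degree ([:[:0,1:]:] + map_poly C P1') = (if degree P1' = 0 then 0 else degree P1')"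
proof -
  have dC: "degree (map_poly C P1') = degree P1'" by (rule degree_map_poly) auto
  show ?thesis
  proof (cases "degree P1' = 0")
    case True
    then show ?thesis using degree_add_le[of "[:[:0,1:]:]" 0 "map_poly C P1'"] dC by auto
  next
    case False
    then show ?thesis using dC by (subst degree_add_eq_right) auto
  qed
qed

lemma ev_nonzero:
  assumes n: "n \<ge> 1" "3 dvd n" and w: "w^3 = 2"
  shows "map_poly (evw (n div 3) w) (cusp_equation d n) \<noteq> 0"
proof -
  let ?k = "n div 3"
  let ?P = "[:[:0,1:]:] + map_poly C (P1 d n)" and ?Q = "map_poly C (Q1 n)"
  let ?m = "degree ?P"
  interpret e: map_poly_comm_ring_hom "evw ?k w" by (rule map_poly_comm_ring_hom.intro, rule evw_hom)
  interpret Psi: comm_ring_hom "map_poly (evw ?k w)" by (rule map_poly_evw_hom)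
  have w0: "w \<noteq> 0" using w by auto
  have "degree ?Q = degree (Q1 n)" by (rule degree_map_poly) auto
  then have dQ: "degree ?Q = n" using degree_Q1[of n] by simp
  have cusp: "cusp_equation d n = det (sylvester_mat_sub ?m n ?P ?Q)"
    unfolding cusp_eq2 resultant_def sylvester_mat_def dQ ..
  have Q': "map_poly (map_poly (evw ?k w)) ?Q = 1"
  proof (rule poly_eqI)
    fix i
    have "coeff (map_poly (map_poly (evw ?k w)) ?Q) i = [:coeff (map_poly (evw ?k w) (Q1 n)) i:]"
      by (simp add: coeff_map_poly map_poly_const)
    also have "\<dots> = coeff 1 i" unfolding map_evw_Q1[OF n w] by (simp add: coeff_1)
    finally show "coeff (map_poly (map_poly (evw ?k w)) ?Q) i = coeff 1 i" .
  qed
  have cP: "coeff (map_poly (map_poly (evw ?k w)) ?P) ?m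
      = [:evw ?k w (coeff (P1 d n) ?m):] + (if ?m = 0 then [:0,1:] else 0)"
    by (cases ?m) (simp_all add: coeff_map_poly hom_distribs map_poly_const)
  have cP0: "coeff (map_poly (map_poly (evw ?k w)) ?P) ?m \<noteq> 0"
  proof (cases "?m = 0")
    case True
    define a where "a = evw ?k w (coeff (P1 d n) ?m)"
    have "coeff (map_poly (map_poly (evw ?k w)) ?P) ?m = [:a:] + [:0,1:]" unfolding cP a_def using True by simp
    also have "\<dots> = [:a, 1:]" by simp
    finally show ?thesis by auto
  next
    case False
    then have m: "?m = degree (P1 d n)" using degree_P_cases[of "P1 d n"] by (auto split: if_splits)
    have "evw ?k w (coeff (P1 d n) ?m) \<noteq> 0" unfolding m using P1_top[OF w0, of d n] by simp
    then show ?thesis unfolding cP using False by simp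
  qed
  have "map_poly (evw ?k w) (cusp_equation d n)
     = det (sylvester_mat_sub ?m n (map_poly (map_poly (evw ?k w)) ?P) (map_poly (map_poly (evw ?k w)) ?Q))"
    unfolding cusp by (rule comm_ring_hom.det_sylvester_hom[OF map_poly_evw_hom])
  also have "\<dots> = coeff (map_poly (map_poly (evw ?k w)) ?P) ?m ^ n" unfolding Q' by (rule det_sylvester_one)
  finally show ?thesis using cP0 by simp
qed

definition piZ :: "nat \<Rightarrow> mpoly \<Rightarrow> mpoly" where
  "piZ k = subst Const (\<lambda>v. if v = Zeta k then pvar (Zeta k) else 0)"
definition sig :: "nat \<Rightarrow> mpoly \<Rightarrow> mpoly poly" where
  "sig k = subst (\<lambda>c. [:Const c:]) (\<lambda>v. if v = Zeta k then [:pvar (Zeta k):] else [:0, pvar v:])"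
definition chi :: "nat \<Rightarrow> mpoly \<Rightarrow> complex poly" where
  "chi k = subst (\<lambda>c. [:c:]) (\<lambda>v. if v = Zeta k then [:0,1:] else 0)"
definition ins :: "nat \<Rightarrow> complex poly \<Rightarrow> mpoly" where
  "ins k H = poly (map_poly Const H) (pvar (Zeta k))"

lemma CConst_hom: "comm_ring_hom (\<lambda>c. [:Const c:])"
  by unfold_locales (auto simp: Const.hom_add Const.hom_mult)

lemma cC_hom: "comm_ring_hom (\<lambda>c::complex. [:c:])"
  by unfold_locales auto

lemma poly_at_hom: "comm_ring_hom (\<lambda>p. poly p x)"
  by unfold_locales auto

interpretation ConstP: map_poly_comm_ring_hom Const by (rule map_poly_comm_ring_hom.intro, rule Const_hom)

lemma ins_hom: "comm_ring_hom (ins k)"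
  unfolding ins_def by unfold_locales (auto simp: hom_distribs)

lemma piZ_hom: "comm_ring_hom (piZ k)" unfolding piZ_def by (rule subst_hom_I[OF Const_hom])
lemma sig_hom: "comm_ring_hom (sig k)" unfolding sig_def by (rule subst_hom_I[OF CConst_hom])
lemma chi_hom: "comm_ring_hom (chi k)" unfolding chi_def by (rule subst_hom_I[OF cC_hom])

lemma subst_zero[simp]: "subst \<phi> a 0 = 0" unfolding subst_def by simp

lemma Const0[simp]: "Const 0 = 0" by (simp add: Const_def)

lemma only_Z:
  assumes w0: "w \<noteq> 0" and wp: "piZ k w = w" and hw: "h dvd w"
  shows "h = piZ k h"
proof -
  interpret s: comm_ring_hom "sig k" by (rule sig_hom)
  obtain g where wg: "w = h * g" using hw by (auto elim: dvdE)
  have "sig k w = sig k (piZ k w)" using wp by simp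
  also have "\<dots> = subst (sig k \<circ> Const) (sig k \<circ> (\<lambda>v. if v = Zeta k then pvar (Zeta k) else 0)) w"
    unfolding piZ_def by (rule subst_comp[OF sig_hom])
  also have "sig k \<circ> Const = (\<lambda>c. [:Const c:])"
    by (auto simp: sig_def subst_Const fun_eq_iff)
  also have "sig k \<circ> (\<lambda>v. if v = Zeta k then pvar (Zeta k) else 0) = C \<circ> (\<lambda>v. if v = Zeta k then pvar (Zeta k) else 0)"
    by (auto simp: sig_def subst_pvar fun_eq_iff Const.hom_one)
  also have "(\<lambda>c. [:Const c:]) = C \<circ> Const" by auto
  also have "subst (C \<circ> Const) (C \<circ> (\<lambda>v. if v = Zeta k then pvar (Zeta k) else 0)) w = C (piZ k w)"
    unfolding piZ_def by (rule subst_comp[OF C_hom, symmetric])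
  finally have sw: "sig k w = [:w:]" using wp by simp
  have "sig k h * sig k g = [:w:]" using sw wg by (simp add: s.hom_mult)
  moreover have "sig k h \<noteq> 0" "sig k g \<noteq> 0" using \<open>sig k h * sig k g = [:w:]\<close> w0 by auto
  ultimately have "degree (sig k h) + degree (sig k g) = 0" by (metis degree_mult_eq degree_pCons_0)
  then have "degree (sig k h) = 0" by simp
  then obtain c where sc: "sig k h = [:c:]" by (rule degree_eq_zeroE)
  have "h = subst Const pvar h" by (rule subst_id[symmetric])
  also have "\<dots> = subst ((\<lambda>p. poly p 1) \<circ> (\<lambda>c. [:Const c:]))
     ((\<lambda>p. poly p 1) \<circ> (\<lambda>v. if v = Zeta k then [:pvar (Zeta k):] else [:0, pvar v:])) h"
    by (rule arg_cong2[where f = "\<lambda>a b. subst a b h"]) (auto simp: fun_eq_iff)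
  also have "\<dots> = poly (sig k h) 1" unfolding sig_def by (rule subst_comp[OF poly_at_hom, symmetric])
  also have "\<dots> = poly (sig k h) 0" unfolding sc by simp
  also have "\<dots> = subst ((\<lambda>p. poly p 0) \<circ> (\<lambda>c. [:Const c:]))
     ((\<lambda>p. poly p 0) \<circ> (\<lambda>v. if v = Zeta k then [:pvar (Zeta k):] else [:0, pvar v:])) h"
    unfolding sig_def by (rule subst_comp[OF poly_at_hom])
  also have "\<dots> = piZ k h" unfolding piZ_def
    by (rule arg_cong2[where f = "\<lambda>a b. subst a b h"]) (auto simp: fun_eq_iff)
  finally show ?thesis .
qed

lemma piZ_ins_chi: "piZ k h = ins k (chi k h)"
proof -
  have "ins k (chi k h) = subst (ins k \<circ> (\<lambda>c. [:c:])) (ins k \<circ> (\<lambda>v. if v = Zeta k then [:0,1:] else 0)) h"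
    unfolding chi_def by (rule subst_comp[OF ins_hom])
  also have "\<dots> = piZ k h" unfolding piZ_def
    by (rule arg_cong2[where f = "\<lambda>a b. subst a b h"]) (auto simp: fun_eq_iff ins_def map_poly_const)
  finally show ?thesis by simp
qed

lemma evw_Const[simp]: "evw k w (Const c) = c" unfolding evw_def subst_Const by simp

lemma Const_unit: "c \<noteq> 0 \<Longrightarrow> Const c dvd 1"
proof -
  assume "c \<noteq> 0"
  then have "Const c * Const (1 / c) = 1" by (simp add: Const.hom_mult[symmetric])
  then show ?thesis by (metis dvd_triv_left)
qed

lemma piZ_pvar: "piZ k (pvar (Zeta k)) = pvar (Zeta k)"
  unfolding piZ_def subst_pvar by (simp add: Const.hom_one)

lemma chi_pvar: "chi k (pvar (Zeta k)) = [:0,1:]"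
  unfolding chi_def subst_pvar by simp

lemma ins_const: "ins k [:c:] = Const c" unfolding ins_def by (simp add: map_poly_const)

lemma coprime_part:
  assumes n: "n \<ge> 1" and H: "\<forall>i. h dvd coeff (cusp_equation d n) i"
  shows "h dvd 1"
proof -
  let ?m = "mdeg d n" and ?k = "n div 3"
  define cn where "cn = coeff (cusp_equation d n) n"
  have cn: "cn = (-1)^(?m * n) * L n ^ ?m" unfolding cn_def by (rule cusp_lead)
  have hcn: "h dvd cn" using H unfolding cn_def by auto
  have cn0: "cn \<noteq> 0" unfolding cn using L_nz[of n] by simp
  show ?thesis
  proof (cases "3 dvd n")
    case False
    then have "cn = Const ((-1)^(?m * n) * 2 ^ ?m)" unfolding cn L_def by (simp add: hom_distribs)
    then have "cn dvd 1" by (simp add: Const_unit)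
    then show ?thesis using hcn by (rule dvd_trans[rotated])
  next
    case True
    interpret piZ: comm_ring_hom "piZ ?k" by (rule piZ_hom)
    interpret chi: comm_ring_hom "chi ?k" by (rule chi_hom)
    interpret ins: comm_ring_hom "ins ?k" by (rule ins_hom)
    have Ln: "L n = 2 - pvar (Zeta ?k) ^ 3" unfolding L_def using True by simp
    have "piZ ?k cn = cn" unfolding cn Ln
      by (simp add: hom_distribs piZ_pvar)
    from only_Z[OF cn0 this hcn] have hp: "h = ins ?k (chi ?k h)" unfolding piZ_ins_chi .
    define Hp where "Hp = chi ?k h"
    have Hdvd: "Hp dvd chi ?k cn" unfolding Hp_def using hcn by (rule chi.hom_dvd)
    have chicn: "chi ?k cn = (-1)^(?m * n) * (2 - [:0,1:] ^ 3) ^ ?m"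
      unfolding cn Ln by (simp add: hom_distribs chi_pvar)
    show ?thesis
    proof (cases "degree Hp = 0")
      case True
      then obtain c where c: "Hp = [:c:]" by (rule degree_eq_zeroE)
      have hc: "h = Const c" using hp unfolding Hp_def[symmetric] c ins_const .
      have "c \<noteq> 0" using hcn cn0 unfolding hc by auto
      then show ?thesis unfolding hc by (rule Const_unit)
    next
      case False
      then obtain w where w: "poly Hp w = 0" using alg_closed_imp_poly_has_root by blast
      from Hdvd obtain G where "chi ?k cn = Hp * G" by (auto elim: dvdE)
      then have "poly (chi ?k cn) w = 0" using w by simp
      then have "(2 - w ^ 3) ^ ?m = 0" unfolding chicn by simp
      then have w3: "w ^ 3 = 2" by simp
      from w obtain H' where HH: "Hp = [:-w, 1:] * H'" by (auto simp: poly_eq_0_iff_dvd elim: dvdE)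
      interpret ev: comm_ring_hom "evw ?k w" by (rule evw_hom)
      have "evw ?k w (ins ?k [:-w, 1:]) = 0"
        unfolding ins_def by (simp add: map_poly_pCons hom_distribs aw_def)
      moreover have "h = ins ?k [:-w, 1:] * ins ?k H'" using hp unfolding Hp_def[symmetric] HH using ins.hom_mult by metis
      ultimately have evh: "evw ?k w h = 0" by (simp add: ev.hom_mult)
      have "map_poly (evw ?k w) (cusp_equation d n) = 0"
      proof (rule poly_eqI)
        fix i
        have "evw ?k w h dvd evw ?k w (coeff (cusp_equation d n) i)" using H by auto
        then show "coeff (map_poly (evw ?k w) (cusp_equation d n)) i = coeff 0 i"
          unfolding evh by (simp add: coeff_map_poly)
      qed
      with ev_nonzero[OF n True w3] show ?thesis by simp
    qed
  qed
qed

theorem mainTheorem10: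
  shows "(\<forall>p q r :: complex poly.
            cuspidal p q r \<longleftrightarrow>
              (resultant (p + r^2) (2 * q - r^3) = 0 \<or> (p + r^2 = 0 \<and> 2 * q - r^3 = 0)))
       \<and> (\<forall>d n :: nat. n \<ge> 1 \<longrightarrow>
            degree (cusp_equation d n) = n \<and>
            (\<forall>h :: mpoly. (\<forall>i. h dvd coeff (cusp_equation d n) i) \<longrightarrow> h dvd 1))"
proof (intro conjI allI impI)
  fix p q r :: "complex poly"
  show "cuspidal p q r \<longleftrightarrow>
      (resultant (p + r^2) (2 * q - r^3) = 0 \<or> (p + r^2 = 0 \<and> 2 * q - r^3 = 0))"
    unfolding cusp_iff_common_root common_root_iff_resultant ..
next
  fix d n :: nat
  assume "n \<ge> 1"
  then show "degree (cusp_equation d n) = n" by (simp add: cusp_degree)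
  fix h :: mpoly
  assume "\<forall>i. h dvd coeff (cusp_equation d n) i"
  then show "h dvd 1" using coprime_part \<open>n \<ge> 1\<close> by blast
qed

end
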